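(* Let $\beta\in[0,1)$ and let $U:\mathbb{R}^d\to\mathbb{R}$ be twice continuously differentiable with $\nabla U(0)=0$ and $\sup_x\|\mathrm{D}^2U(x)\|\le\mathtt{L}$. Assume there exist $\mathtt{m}_\beta>0$, $\mathtt{L}_\beta,\mathtt{K}_\beta\ge0$ with $\frac{\mathtt{L}_\beta}{1+\|x\|^{3\beta/4}}\ge\mathrm{D}^2U(x)[y,y]\ge\frac{\mathtt{m}_\beta}{1+\|x\|^\beta}$ for all $\|x\|\ge\mathtt{K}_\beta$, $\|y\|=1$. Let $\tilde{\mathtt{K}}_\beta=[4\mathtt{K}_\beta(1+\mathtt{L}/\mathtt{m}_\beta)]\vee[4\mathtt{K}_\beta(1+\mathtt{L}/\mathtt{m}_\beta)]^{1/(1-\beta)}$ and $\tilde{\mathtt{C}}_\beta=\mathtt{L}\tilde{\mathtt{K}}_\beta^2$. Then for all $x\in\mathbb{R}^d$, $$\langle\nabla U(x),x\rangle\ge\frac{(\mathtt{m}_\beta/2)\|x\|^2}{1+\|x\|^\beta}-\tilde{\mathtt{C}}_\beta\mathbb{1}_{B(0,\tilde{\mathtt{K}}_\beta)}(x).$$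
   Context: $B(0,K)=\{x\in\mathbb{R}^d:\|x\|<K\}$. *)

theory Defs
  imports "HOL-Analysis.Analysis"
begin

text \<open>Real power r^a for r \<ge> 0 with the usual convention r^0 = 1 (also for r = 0);
  Isabelle's powr has 0 powr 0 = 0, which we avoid.\<close>
definition rpow :: "real \<Rightarrow> real \<Rightarrow> real" where
  "rpow r a = (if a = 0 then 1 else r powr a)"

end

theory Submission
  imports Defs
begin

lemma mvt_lower:
  fixes g g' :: "real \<Rightarrow> real"
  assumes "a \<le> b" and "\<And>t. DERIV g t :> g' t" and "\<And>t. a \<le> t \<Longrightarrow> t \<le> b \<Longrightarrow> g' t \<ge> c"
  shows "g b - g a \<ge> c * (b - a)"
proof (cases "a = b")
  case True then show ?thesis by simp
next
  case False
  with assms(1) have "a < b" by simp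
  from MVT2[OF this assms(2)] obtain z where z: "a < z" "z < b" "g b - g a = (b - a) * g' z" by blast
  have "c \<le> g' z" using assms(3) z by simp
  then show ?thesis using z \<open>a<b\<close> by (simp add: mult_left_mono mult.commute)
qed

lemma deriv_g:
  fixes gradU :: "'a::euclidean_space \<Rightarrow> 'a" and hessU :: "'a \<Rightarrow> ('a \<Rightarrow>\<^sub>L 'a)"
  assumes hess: "\<And>x. (gradU has_derivative blinfun_apply (hessU x)) (at x)"
  shows "DERIV (\<lambda>t. gradU (t *\<^sub>R x) \<bullet> x) t :> (hessU (t *\<^sub>R x) x \<bullet> x)"
proof -
  have d1: "((\<lambda>t. t *\<^sub>R x) has_derivative (\<lambda>h. h *\<^sub>R x)) (at t)"
    by (auto intro!: derivative_eq_intros)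
  have d2: "((\<lambda>t. gradU (t *\<^sub>R x)) has_derivative (\<lambda>h. hessU (t *\<^sub>R x) (h *\<^sub>R x))) (at t)"
    using has_derivative_compose[OF d1 hess] .
  have d3: "((\<lambda>t. gradU (t *\<^sub>R x) \<bullet> x) has_derivative (\<lambda>h. hessU (t *\<^sub>R x) (h *\<^sub>R x) \<bullet> x)) (at t)"
    using has_derivative_inner_left[OF d2] .
  have "(\<lambda>h. hessU (t *\<^sub>R x) (h *\<^sub>R x) \<bullet> x) = (\<lambda>h. (hessU (t *\<^sub>R x) x \<bullet> x) * h)"
    by (auto simp: blinfun.scaleR_right)
  with d3 show ?thesis by (simp add: has_field_derivative_def)
qed

lemma quad_bound:
  fixes H :: "'a::euclidean_space \<Rightarrow>\<^sub>L 'a"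
  assumes "norm H \<le> L"
  shows "H x \<bullet> x \<ge> - L * (norm x)\<^sup>2"
proof -
  have "\<bar>H x \<bullet> x\<bar> \<le> norm (H x) * norm x" by (rule Cauchy_Schwarz_ineq2)
  also have "\<dots> \<le> norm H * norm x * norm x" by (simp add: mult_right_mono norm_blinfun)
  also have "\<dots> \<le> L * norm x * norm x" by (simp add: assms mult_right_mono)
  finally show ?thesis by (simp add: power2_eq_square)
qed


lemma quad_upper:
  fixes H :: "'a::euclidean_space \<Rightarrow>\<^sub>L 'a"
  assumes "norm H \<le> L"
  shows "H x \<bullet> x \<le> L * (norm x)\<^sup>2"
proof -
  have "\<bar>H x \<bullet> x\<bar> \<le> norm (H x) * norm x" by (rule Cauchy_Schwarz_ineq2)
  also have "\<dots> \<le> norm H * norm x * norm x" by (simp add: mult_right_mono norm_blinfun)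
  also have "\<dots> \<le> L * norm x * norm x" by (simp add: assms mult_right_mono)
  finally show ?thesis by (simp add: power2_eq_square)
qed

lemma rpow_pos: "r > 0 \<Longrightarrow> rpow r b = r powr b"
  by (simp add: rpow_def)


theorem lemma11:
  fixes U :: "'a::euclidean_space \<Rightarrow> real"
    and gradU :: "'a \<Rightarrow> 'a"
    and hessU :: "'a \<Rightarrow> ('a \<Rightarrow>\<^sub>L 'a)"
    and x :: 'a
    and \<beta> L m\<^sub>\<beta> L\<^sub>\<beta> K\<^sub>\<beta> :: real
  assumes beta: "0 \<le> \<beta>" "\<beta> < 1"
    and grad: "\<And>x. (U has_derivative (\<lambda>h. gradU x \<bullet> h)) (at x)"
    and hess: "\<And>x. (gradU has_derivative blinfun_apply (hessU x)) (at x)"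
    and hess_cont: "continuous_on UNIV hessU"
    and grad0: "gradU 0 = 0"
    and hess_bound: "\<And>x. norm (hessU x) \<le> L"
    and m_pos: "m\<^sub>\<beta> > 0" and L_nonneg: "L\<^sub>\<beta> \<ge> 0" and K_nonneg: "K\<^sub>\<beta> \<ge> 0"
    and curv: "\<And>x y. norm x \<ge> K\<^sub>\<beta> \<Longrightarrow> norm y = 1 \<Longrightarrow>
        L\<^sub>\<beta> / (1 + rpow (norm x) (3 * \<beta> / 4)) \<ge> y \<bullet> hessU x y \<and>
        y \<bullet> hessU x y \<ge> m\<^sub>\<beta> / (1 + rpow (norm x) \<beta>)"
  defines "Kt \<equiv> max (4 * K\<^sub>\<beta> * (1 + L / m\<^sub>\<beta>)) ((4 * K\<^sub>\<beta> * (1 + L / m\<^sub>\<beta>)) powr (1 / (1 - \<beta>)))"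
    and "Ct \<equiv> L * (max (4 * K\<^sub>\<beta> * (1 + L / m\<^sub>\<beta>)) ((4 * K\<^sub>\<beta> * (1 + L / m\<^sub>\<beta>)) powr (1 / (1 - \<beta>))))\<^sup>2"
  shows "gradU x \<bullet> x \<ge>
      (m\<^sub>\<beta> / 2) * (norm x)\<^sup>2 / (1 + rpow (norm x) \<beta>) - Ct * indicator (ball 0 Kt) x"
proof -
  define r where "r = norm x"
  define m where "m = m\<^sub>\<beta>"
  define K where "K = K\<^sub>\<beta>"
  define A where "A = 4 * K * (1 + L / m)"
  define g where "g = (\<lambda>t. gradU (t *\<^sub>R x) \<bullet> x)"
  define g' where "g' = (\<lambda>t. hessU (t *\<^sub>R x) x \<bullet> x)"
  have Kt: "Kt = max A (A powr (1 / (1 - \<beta>)))" unfolding Kt_def A_def K_def m_def ..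
  have Ct: "Ct = L * Kt\<^sup>2" unfolding Ct_def Kt_def ..
  have mpos: "m > 0" using m_pos m_def by simp
  have K0: "K \<ge> 0" using K_nonneg K_def by simp
  have L0: "L \<ge> 0" using hess_bound[of 0] norm_ge_zero[of "hessU 0"] by linarith
  have A0: "A \<ge> 0" using K0 L0 mpos by (simp add: A_def)
  have "1 \<le> 1 + L / m" using L0 mpos by simp
  then have "K * 1 \<le> K * (1 + L / m)" using K0 by (rule mult_left_mono)
  then have A4K: "A \<ge> 4 * K" by (simp add: A_def)
  have KtA: "Kt \<ge> A" using Kt by simp
  have Kt0: "Kt \<ge> 0" using KtA A0 by simp
  have Ct0: "Ct \<ge> 0" using Ct L0 by simp
  have gD: "\<And>t. DERIV g t :> g' t" unfolding g_def g'_def by (rule deriv_g[OF hess])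
  have g0: "g 0 = 0" by (simp add: g_def grad0)
  have g1: "g 1 = gradU x \<bullet> x" by (simp add: g_def)
  have g'low: "\<And>t. 0 \<le> t \<Longrightarrow> g' t \<ge> - L * r\<^sup>2" unfolding g'_def r_def by (rule quad_bound[OF hess_bound])
  have ind: "indicator (ball 0 Kt) x = (if r < Kt then 1 else (0::real))"
    by (simp add: r_def indicator_def)
  show ?thesis
  proof (cases "r = 0")
    case True
    then have "x = 0" by (simp add: r_def)
    then show ?thesis using grad0 Ct0 by (simp add: indicator_def)
  next
    case False
    then have rpos: "r > 0" by (simp add: r_def)
    define p where "p = r powr \<beta>"
    have prp: "rpow (norm x) \<beta> = p" using rpos by (simp add: p_def r_def rpow_pos)
    have p0: "p \<ge> 0" by (simp add: p_def)
    define y where "y = (1 / r) *\<^sub>R x"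
    have ny: "norm y = 1" using rpos by (simp add: y_def r_def)
    have xy: "x = r *\<^sub>R y" using rpos by (simp add: y_def)
    have hy: "\<And>z. hessU z x \<bullet> x = r\<^sup>2 * (y \<bullet> hessU z y)"
      by (simp add: xy blinfun.scaleR_right power2_eq_square algebra_simps inner_commute)
    have g'up: "\<And>t. 0 \<le> t \<Longrightarrow> t \<le> 1 \<Longrightarrow> t * r \<ge> K \<Longrightarrow> g' t \<ge> m * r\<^sup>2 / (1 + p)"
    proof -
      fix t :: real assume t: "0 \<le> t" "t \<le> 1" "t * r \<ge> K"
      have nt: "norm (t *\<^sub>R x) = t * r" using t by (simp add: r_def)
      have c: "y \<bullet> hessU (t *\<^sub>R x) y \<ge> m / (1 + rpow (t * r) \<beta>)"
      proof -
        have "K\<^sub>\<beta> \<le> norm (t *\<^sub>R x)" unfolding nt using t by (simp add: K_def)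
        from conjunct2[OF curv[OF this ny]] show ?thesis by (simp only: nt m_def)
      qed
      have rp: "rpow (t * r) \<beta> \<le> p"
      proof (cases "\<beta> = 0")
        case True then show ?thesis using rpos by (simp add: rpow_def p_def)
      next
        case False
        have "(t * r) powr \<beta> \<le> r powr \<beta>"
          using beta t rpos by (intro powr_mono2) (auto simp: mult_left_le_one_le)
        then show ?thesis using False by (simp add: rpow_def p_def)
      qed
      have rp0: "rpow (t * r) \<beta> \<ge> 0" by (simp add: rpow_def)
      have "m / (1 + p) \<le> m / (1 + rpow (t * r) \<beta>)"
        using rp rp0 mpos by (intro divide_left_mono) auto
      with c have "m / (1 + p) \<le> y \<bullet> hessU (t *\<^sub>R x) y" by linarith
      then have "r\<^sup>2 * (m / (1 + p)) \<le> r\<^sup>2 * (y \<bullet> hessU (t *\<^sub>R x) y)"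
        by (rule mult_left_mono) simp
      then show "g' t \<ge> m * r\<^sup>2 / (1 + p)" by (simp add: g'_def hy mult.commute)
    qed
    have Lbig: "r \<ge> K \<Longrightarrow> L \<ge> m / (1 + p)"
    proof -
      assume "r \<ge> K"
      then have "y \<bullet> hessU x y \<ge> m / (1 + p)" using curv[of x y] ny prp by (simp add: K_def m_def r_def)
      moreover have "hessU x y \<bullet> y \<le> L" using quad_upper[OF hess_bound, of x y] ny by simp
      ultimately show ?thesis by (simp add: inner_commute)
    qed
    have est: "r \<ge> K \<Longrightarrow> gradU x \<bullet> x \<ge> - L * K * r + m * (r\<^sup>2 - K * r) / (1 + p)"
    proof -
      assume rK: "r \<ge> K"
      define s where "s = K / r"
      have s0: "0 \<le> s" and s1: "s \<le> 1" using rK rpos K0 by (auto simp: s_def)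
      have sr: "s * r = K" using rpos by (simp add: s_def)
      have e1: "g s - g 0 \<ge> (- L * r\<^sup>2) * (s - 0)"
        by (rule mvt_lower[OF s0 gD]) (use g'low in simp)
      have e2: "g 1 - g s \<ge> (m * r\<^sup>2 / (1 + p)) * (1 - s)"
        by (rule mvt_lower[OF s1 gD]) (use g'up sr s0 rpos in \<open>auto intro: mult_right_mono\<close>)
      have a1: "(- L * r\<^sup>2) * (s - 0) = - L * K * r" using sr by (simp add: power2_eq_square algebra_simps)
      have a2: "(m * r\<^sup>2 / (1 + p)) * (1 - s) = m * (r\<^sup>2 - K * r) / (1 + p)"
        using sr by (simp add: power2_eq_square algebra_simps)
      show ?thesis using e1 e2 a1 a2 g0 g1 by linarith
    qed
    show ?thesis
    proof (cases "r < Kt")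
      case False
      then have rKt: "r \<ge> Kt" by simp
      have rK: "r \<ge> K" using rKt KtA A4K K0 by linarith
      have key: "m * (r / 2 - K) \<ge> L * K * (1 + p)"
      proof (cases "K = 0")
        case True then show ?thesis using rpos mpos by simp
      next
        case False
        then have Apos: "A > 0" using A4K K0 by linarith
        have "r \<ge> A powr (1 / (1 - \<beta>))" using rKt Kt by simp
        then have "r powr (1 - \<beta>) \<ge> (A powr (1 / (1 - \<beta>))) powr (1 - \<beta>)"
          using beta by (intro powr_mono2) auto
        also have "(A powr (1 / (1 - \<beta>))) powr (1 - \<beta>) = A"
          using beta Apos by (simp add: powr_powr)
        finally have rA: "r powr (1 - \<beta>) \<ge> A" .
        have "r = r powr ((1 - \<beta>) + \<beta>)" using rpos by simp
        also have "\<dots> = r powr (1 - \<beta>) * p" by (simp only: powr_add p_def)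
        finally have "r \<ge> A * p" using rA p0 by (metis mult_right_mono)
        moreover have "r \<ge> A" using rKt KtA by linarith
        ultimately have "m * (A * p) \<le> m * r" "m * A \<le> m * r" using mpos by (simp_all add: mult_left_mono)
        then have "m * r / 2 \<ge> m * A / 4 + m * A * p / 4" by (simp add: algebra_simps)
        moreover have "m * A = 4 * K * (m + L)" using mpos by (simp add: A_def field_simps)
        ultimately have "m * r / 2 \<ge> K * (m + L) + K * (m + L) * p" by simp
        moreover have "K * m * p \<ge> 0" using K0 mpos p0 by simp
        ultimately show ?thesis by (simp add: algebra_simps)
      qed
      have "m * (r\<^sup>2 - K * r) - L * K * r * (1 + p) - (m / 2) * r\<^sup>2
          = r * (m * (r / 2 - K) - L * K * (1 + p))" by (simp add: power2_eq_square algebra_simps)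
      also have "\<dots> \<ge> 0" using key rpos by simp
      finally have "(m / 2) * r\<^sup>2 \<le> m * (r\<^sup>2 - K * r) - L * K * r * (1 + p)" by simp
      then have "(m / 2) * r\<^sup>2 / (1 + p) \<le> (m * (r\<^sup>2 - K * r) - L * K * r * (1 + p)) / (1 + p)"
        using p0 by (intro divide_right_mono) auto
      also have "\<dots> = - L * K * r + m * (r\<^sup>2 - K * r) / (1 + p)"
        using p0 by (simp add: field_simps)
      finally show ?thesis using est[OF rK] ind False prp by (simp add: r_def m_def)
    next
      case True
      then have indi: "indicator (ball 0 Kt) x = (1::real)" using ind by simp
      show ?thesis
      proof (cases "r \<ge> K")
        case True
        define q where "q = m / (1 + p)"
        have q0: "q \<ge> 0" using mpos p0 by (simp add: q_def)
        have qL: "q \<le> L" using Lbig[OF True] by (simp add: q_def)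
        have eq: "m * (r\<^sup>2 - K * r) / (1 + p) = (m / 2) * r\<^sup>2 / (1 + p) + q * ((r - K)\<^sup>2 / 2) - q * K\<^sup>2 / 2"
        proof -
          have e1: "m * (r\<^sup>2 - K * r) / (1 + p) = q * (r\<^sup>2 - K * r)" by (simp add: q_def)
          have e2: "(m / 2) * r\<^sup>2 / (1 + p) = q * r\<^sup>2 / 2" by (simp add: q_def)
          have e3: "q * (r\<^sup>2 - K * r) = q * r\<^sup>2 / 2 + q * ((r - K)\<^sup>2 / 2) - q * K\<^sup>2 / 2"
            by (simp add: power2_eq_square field_simps)
          show ?thesis using e1 e2 e3 by simp
        qed
        have "q * ((r - K)\<^sup>2 / 2) \<ge> 0" using q0 by simp
        moreover have "q * K\<^sup>2 / 2 \<le> L * K\<^sup>2 / 2" using qL by (simp add: mult_right_mono)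
        moreover have "L * K * r \<le> L * K * Kt" using L0 K0 \<open>r < Kt\<close> by (simp add: mult_left_mono)
        moreover have "L * K\<^sup>2 / 2 + L * K * Kt \<le> L * Kt\<^sup>2"
        proof -
          have k4: "4 * K \<le> Kt" using KtA A4K by linarith
          have "(4 * K) * Kt \<le> Kt * Kt" using k4 Kt0 by (rule mult_right_mono)
          then have a1: "4 * (K * Kt) \<le> Kt * Kt" by (simp add: mult.assoc)
          have "(4 * K) * (4 * K) \<le> Kt * Kt" using k4 K0 by (intro mult_mono) auto
          then have a3: "16 * (K * K) \<le> Kt * Kt" by (simp add: algebra_simps)
          have a2: "0 \<le> Kt * Kt" by simp
          have "K\<^sup>2 / 2 + K * Kt \<le> Kt\<^sup>2" unfolding power2_eq_square using a1 a2 a3 by linarith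
          then have "L * (K\<^sup>2 / 2 + K * Kt) \<le> L * Kt\<^sup>2" using L0 by (rule mult_left_mono)
          then show ?thesis by (simp add: algebra_simps)
        qed
        ultimately have "gradU x \<bullet> x \<ge> (m / 2) * r\<^sup>2 / (1 + p) - L * Kt\<^sup>2"
          using est[OF True] eq by linarith
        then show ?thesis using indi Ct prp by (simp add: r_def m_def)
      next
        case False
        then have Kpos: "K > 0" and rK: "r < K" using rpos by auto
        define Kb where "Kb = K powr \<beta>"
        have Kb0: "Kb \<ge> 0" by (simp add: Kb_def)
        have LK: "L \<ge> m / (1 + Kb)"
        proof -
          have n1: "norm (K *\<^sub>R y) = K" using ny Kpos by simp
          have "y \<bullet> hessU (K *\<^sub>R y) y \<ge> m / (1 + rpow K \<beta>)"
            using curv[of "K *\<^sub>R y" y] ny n1 by (simp add: K_def m_def)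
          moreover have "rpow K \<beta> = Kb" using Kpos by (simp add: rpow_pos Kb_def)
          moreover have "hessU (K *\<^sub>R y) y \<bullet> y \<le> L" using quad_upper[OF hess_bound, of "K *\<^sub>R y" y] ny by simp
          ultimately show ?thesis by (simp add: inner_commute)
        qed
        then have mL: "m \<le> L * (1 + Kb)" using Kb0 by (simp add: field_simps)
        have KtKb: "Kt\<^sup>2 \<ge> K\<^sup>2 * Kb"
        proof (cases "K \<le> 1")
          case True
          have "Kb \<le> 1" using True K0 beta by (simp add: Kb_def powr_le1)
          moreover have "Kt \<ge> K" using KtA A4K K0 by linarith
          ultimately have "K\<^sup>2 * Kb \<le> K\<^sup>2" by (simp add: mult_left_le)
          also have "K\<^sup>2 \<le> Kt\<^sup>2" using \<open>Kt \<ge> K\<close> K0 by (simp add: power_mono)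
          finally show ?thesis .
        next
          case False
          have A1: "A \<ge> 1" using False A4K by linarith
          have "(1 + \<beta>) * (1 - \<beta>) \<le> 1" using beta by (simp add: algebra_simps)
          then have "1 + \<beta> \<le> 1 / (1 - \<beta>)" using beta by (simp add: le_divide_eq)
          then have "A powr (1 + \<beta>) \<le> A powr (1 / (1 - \<beta>))" using A1 by (rule powr_mono)
          moreover have "A powr (1 + \<beta>) = A * A powr \<beta>" using A1 by (simp add: powr_add)
          moreover have "A powr \<beta> \<ge> Kb" using A4K K0 beta by (simp add: Kb_def powr_mono2)
          ultimately have "A * Kb \<le> A powr (1 / (1 - \<beta>))" using A0
            by (metis mult_left_mono order_trans)
          then have "Kt \<ge> A * Kb" using Kt by simp
          moreover have "A * Kb \<ge> K * Kb" using A4K K0 Kb0 by (simp add: mult_right_mono)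
          ultimately have k1: "Kt \<ge> K * Kb" by linarith
          have k2: "Kt \<ge> K" using KtA A4K K0 by linarith
          have "Kt * Kt \<ge> K * (K * Kb)" using k1 k2 K0 Kb0
            by (meson mult_mono order_trans mult_nonneg_nonneg)
          then show ?thesis by (simp add: power2_eq_square algebra_simps)
        qed
        have K16: "Kt\<^sup>2 \<ge> 16 * K\<^sup>2"
        proof -
          have "Kt \<ge> 4 * K" using KtA A4K by linarith
          then have "(4 * K)\<^sup>2 \<le> Kt\<^sup>2" using K0 by (intro power_mono) auto
          then show ?thesis by (simp add: power2_eq_square)
        qed
        have e: "g 1 - g 0 \<ge> (- L * r\<^sup>2) * (1 - 0)"
          by (rule mvt_lower[OF _ gD]) (use g'low in simp_all)
        then have G: "gradU x \<bullet> x \<ge> - L * r\<^sup>2" using g0 g1 by simp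
        have r2: "r\<^sup>2 \<le> K\<^sup>2" using rK rpos by (simp add: power_mono)
        have "(m / 2) * r\<^sup>2 / (1 + p) \<le> (m / 2) * r\<^sup>2 / 1"
          using p0 mpos by (intro divide_left_mono) auto
        also have "\<dots> = (m / 2) * r\<^sup>2" by simp
        also have "\<dots> \<le> (m / 2) * K\<^sup>2" using r2 mpos by simp
        also have "\<dots> \<le> L * (1 + Kb) * K\<^sup>2 / 2" using mL by (simp add: mult_right_mono)
        also have "\<dots> \<le> L * (Kt\<^sup>2 - K\<^sup>2)"
        proof -
          have "(1 + Kb) * K\<^sup>2 / 2 \<le> Kt\<^sup>2 - K\<^sup>2" proof -
            have "(1 + Kb) * K\<^sup>2 / 2 = K\<^sup>2 / 2 + K\<^sup>2 * Kb / 2" by (simp add: algebra_simps)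
            then show ?thesis using KtKb K16 zero_le_power2[of K] by linarith
          qed
          then show ?thesis using L0 by (metis mult_left_mono mult.assoc times_divide_eq_right)
        qed
        also have "\<dots> \<le> L * (Kt\<^sup>2 - r\<^sup>2)" using r2 L0 by (simp add: mult_left_mono)
        finally have "(m / 2) * r\<^sup>2 / (1 + p) - L * Kt\<^sup>2 \<le> - L * r\<^sup>2" by (simp add: algebra_simps)
        then show ?thesis using G indi Ct prp by (simp add: r_def m_def)
      qed
    qed
  qed
qed

end
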